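(* Let $\lambda'$ be a Dyck path of length $2(n-1)$ and $\lambda=U\lambda'D$. Then $P_{\lambda,\lambda_0}=P_{\lambda',\lambda_0}$.
   Context: Paths are words in $\{U,D\}$; a Dyck path (word) has equally many $U$ and $D$ and every prefix has at least as many $U$ as $D$. For a Dyck word $\lambda$: match each $U$ with the $D$ closing it; each matched pair is a chord. $A(\lambda)$ is the rooted plane tree with one edge per chord, the edge of chord $c$ hanging directly below the edge of the innermost chord strictly containing $c$, or from the root if none; siblings ordered left to right. Leaf edges are chords whose $U$ is immediately followed by its $D$; the capacity of a leaf edge (with respect to $\lambda_0$, the all-$U$ word of the same length as $\lambda$) is the number of $D$'s of $\lambda$ strictly left of that $U$. A labelling of Lascoux--Sch\"utzenberger type assigns non-negative integers to edges so that each edge's label is at most the labels of the edges directly below it and each leaf edge's label is at most its capacity. $P_{\lambda,\lambda_0}=\sum q^{\text{sum of labels}}$ over these labellings (equal to $1$ for the empty word). *)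

theory Defs
  imports "HOL-Computational_Algebra.Polynomial"
begin

text \<open>Paths are lists of booleans: True = U (up step), False = D (down step).\<close>

definition dyck :: "bool list \<Rightarrow> bool" where
  "dyck w \<longleftrightarrow> count_list w True = count_list w False \<and>
     (\<forall>k \<le> length w. count_list (take k w) False \<le> count_list (take k w) True)"

definition ht :: "bool list \<Rightarrow> nat \<Rightarrow> int" where
  "ht w k = int (count_list (take k w) True) - int (count_list (take k w) False)"

text \<open>Positions of the U steps; each U step is the left end of a chord (= an edge of A(w)).\<close>
definition ups :: "bool list \<Rightarrow> nat set" where
  "ups w = {i. i < length w \<and> w ! i}"

definition mate :: "bool list \<Rightarrow> nat \<Rightarrow> nat" where
  "mate w i = (LEAST j. i < j \<and> j < length w \<and> ht w (Suc j) = ht w i)"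

definition chord_contains :: "bool list \<Rightarrow> nat \<Rightarrow> nat \<Rightarrow> bool" where
  "chord_contains w e c \<longleftrightarrow> e \<in> ups w \<and> c \<in> ups w \<and> e < c \<and> mate w c < mate w e"

text \<open>Edge c hangs directly below edge e in A(w): e is the innermost chord strictly containing c.\<close>
definition child :: "bool list \<Rightarrow> nat \<Rightarrow> nat \<Rightarrow> bool" where
  "child w e c \<longleftrightarrow> chord_contains w e c \<and> \<not> (\<exists>d. chord_contains w e d \<and> chord_contains w d c)"

definition leaf_edge :: "bool list \<Rightarrow> nat \<Rightarrow> bool" where
  "leaf_edge w e \<longleftrightarrow> e \<in> ups w \<and> mate w e = Suc e"

text \<open>Capacity of a leaf edge w.r.t. the all-U word: number of D's strictly left of its U.\<close>
definition capacity :: "bool list \<Rightarrow> nat \<Rightarrow> nat" where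
  "capacity w e = count_list (take e w) False"

text \<open>Labellings of Lascoux--Schuetzenberger type (edges identified with U positions;
  the labelling is extended by 0 outside the edges).\<close>
definition LS_labelling :: "bool list \<Rightarrow> (nat \<Rightarrow> nat) \<Rightarrow> bool" where
  "LS_labelling w f \<longleftrightarrow>
     (\<forall>e c. child w e c \<longrightarrow> f e \<le> f c) \<and>
     (\<forall>e. leaf_edge w e \<longrightarrow> f e \<le> capacity w e) \<and>
     (\<forall>i. i \<notin> ups w \<longrightarrow> f i = 0)"

definition P_LS :: "bool list \<Rightarrow> int poly" where
  "P_LS w = (\<Sum>f \<in> {f. LS_labelling w f}. monom 1 (\<Sum>e \<in> ups w. f e))"

end

theory Submission imports Defs begin

abbreviation W :: "bool list \<Rightarrow> bool list" where "W l \<equiv> True # l @ [False]"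

lemma ht_step: "k < length v \<Longrightarrow> ht v (Suc k) = ht v k + (if v!k then 1 else -1)"
  by (simp add: ht_def take_Suc_conv_app_nth)

lemma ht_ivt: "a \<le> b \<Longrightarrow> b \<le> length v \<Longrightarrow> ht v b \<le> h \<Longrightarrow> h \<le> ht v a \<Longrightarrow> \<exists>k. a \<le> k \<and> k \<le> b \<and> ht v k = h"
proof (induction b rule: dec_induct)
  case base then show ?case by auto
next
  case (step b)
  show ?case
  proof (cases "ht v b \<le> h")
    case True then show ?thesis using step by force
  next
    case False
    have "ht v (Suc b) = h" using ht_step[of b v] step.prems False by (auto split: if_splits)
    then show ?thesis using step by (intro exI[of _ "Suc b"]) auto
  qed
qed

lemma dyck_nonneg: "dyck l \<Longrightarrow> k \<le> length l \<Longrightarrow> ht l k \<ge> 0"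
  unfolding dyck_def ht_def by auto

lemma dyck_end: "dyck l \<Longrightarrow> ht l (length l) = 0"
  unfolding dyck_def ht_def by auto

lemma mate_props:
  assumes "dyck l" "i \<in> ups l"
  shows "i < mate l i \<and> mate l i < length l \<and> ht l (Suc (mate l i)) = ht l i"
proof -
  have i: "i < length l" "l!i" using assms(2) by (auto simp: ups_def)
  have s: "ht l (Suc i) = ht l i + 1" using ht_step[OF i(1)] i(2) by simp
  obtain k where k: "Suc i \<le> k" "k \<le> length l" "ht l k = ht l i"
    using ht_ivt[of "Suc i" "length l" l "ht l i"] i s dyck_end[OF assms(1)] dyck_nonneg[OF assms(1), of i]
    by auto
  then obtain j where "k = Suc j" by (cases k) auto
  moreover have "j \<noteq> i" using k s \<open>k = Suc j\<close> by auto
  ultimately have "i < j \<and> j < length l \<and> ht l (Suc j) = ht l i" using k by auto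
  then have "\<exists>j. i < j \<and> j < length l \<and> ht l (Suc j) = ht l i" by blast
  then show ?thesis unfolding mate_def by (rule LeastI_ex)
qed

lemma mate_le: "i < j \<Longrightarrow> j < length l \<Longrightarrow> ht l (Suc j) = ht l i \<Longrightarrow> mate l i \<le> j"
  unfolding mate_def by (rule Least_le) auto

lemma child_next:
  assumes "dyck l" "l!k" "l!(Suc k)" "Suc k < length l"
  shows "child l k (Suc k)"
proof -
  have u: "k \<in> ups l" "Suc k \<in> ups l" using assms by (auto simp: ups_def)
  define m where "m = mate l k"
  have m: "k < m" "m < length l" "ht l (Suc m) = ht l k" using mate_props[OF assms(1) u(1)] m_def by auto
  have h1: "ht l (Suc k) = ht l k + 1" using ht_step[of k l] assms by simp
  have h2: "ht l (Suc (Suc k)) = ht l k + 2" using ht_step[of "Suc k" l] assms h1 by simp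
  have "m \<noteq> Suc k" using m h2 by auto
  then obtain q where q: "Suc (Suc k) \<le> q" "q \<le> Suc m" "ht l q = ht l k + 1"
    using ht_ivt[of "Suc (Suc k)" "Suc m" l "ht l k + 1"] m h2 by auto
  have "q \<noteq> Suc (Suc k)" "q \<noteq> Suc m" using q h2 m by auto
  then obtain j where j: "q = Suc j" "Suc k < j" "j < m" using q by (cases q) auto
  have "mate l (Suc k) \<le> j" using j m q h1 by (intro mate_le) auto
  then have "mate l (Suc k) < mate l k" using j m_def by auto
  then show ?thesis using u unfolding child_def chord_contains_def by auto
qed

lemma leaf_next:
  assumes "l!k" "\<not> l!(Suc k)" "Suc k < length l"
  shows "leaf_edge l k"
proof -
  have h1: "ht l (Suc k) = ht l k + 1" using ht_step[of k l] assms by simp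
  have h2: "ht l (Suc (Suc k)) = ht l k" using ht_step[of "Suc k" l] assms h1 by simp
  have "mate l k = Suc k" unfolding mate_def
    by (rule Least_equality) (use assms h2 in auto)
  then show ?thesis using assms by (auto simp: leaf_edge_def ups_def)
qed

lemma htW: "k \<le> length l \<Longrightarrow> ht (W l) (Suc k) = 1 + ht l k"
  by (simp add: ht_def)

lemma htW_end: "dyck l \<Longrightarrow> ht (W l) (Suc (Suc (length l))) = 0"
  using dyck_end[of l] by (simp add: ht_def dyck_def)

lemma upsW: "ups (W l) = insert 0 (Suc ` ups l)"
  unfolding ups_def
  apply (rule set_eqI)
  apply (case_tac x)
   apply (auto simp: nth_append)
  done

lemma mateW0: "dyck l \<Longrightarrow> mate (W l) 0 = Suc (length l)"
  unfolding mate_def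
proof (rule Least_equality)
  assume d: "dyck l"
  show "0 < Suc (length l) \<and> Suc (length l) < length (W l) \<and> ht (W l) (Suc (Suc (length l))) = ht (W l) 0"
    using htW_end[OF d] by (simp add: ht_def)
  fix y assume y: "0 < y \<and> y < length (W l) \<and> ht (W l) (Suc y) = ht (W l) 0"
  show "Suc (length l) \<le> y"
  proof (rule ccontr)
    assume "\<not> ?thesis"
    then have "y \<le> length l" by simp
    then have "ht (W l) (Suc y) = 1 + ht l y" by (rule htW)
    moreover have "ht l y \<ge> 0" using dyck_nonneg[OF d \<open>y \<le> length l\<close>] .
    ultimately show False using y by (simp add: ht_def)
  qed
qed

lemma mateW: assumes d: "dyck l" and i: "i \<in> ups l"
  shows "mate (W l) (Suc i) = Suc (mate l i)"
  unfolding mate_def[of "W l"]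
proof (rule Least_equality)
  have mp: "i < mate l i \<and> mate l i < length l \<and> ht l (Suc (mate l i)) = ht l i" by (rule mate_props[OF d i])
  have il: "i < length l" using i by (simp add: ups_def)
  show "Suc i < Suc (mate l i) \<and> Suc (mate l i) < length (W l) \<and> ht (W l) (Suc (Suc (mate l i))) = ht (W l) (Suc i)"
    using mp htW[of "Suc (mate l i)" l] htW[of i l] il by simp
  fix y assume y: "Suc i < y \<and> y < length (W l) \<and> ht (W l) (Suc y) = ht (W l) (Suc i)"
  have hi: "ht (W l) (Suc i) = 1 + ht l i" using htW[of i l] il by simp
  have "ht l i \<ge> 0" using dyck_nonneg[OF d, of i] il by simp
  then have "y \<noteq> Suc (length l)" using y hi htW_end[OF d] by auto
  then obtain j where j: "y = Suc j" "j < length l" using y by (cases y) auto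
  have "ht l (Suc j) = ht l i" using y j hi htW[of "Suc j" l] by simp
  then have "mate l i \<le> j" using j y by (intro mate_le) auto
  then show "Suc (mate l i) \<le> y" using j by simp
qed

lemma ccW: assumes d: "dyck l"
  shows "chord_contains (W l) (Suc e) (Suc c) \<longleftrightarrow> chord_contains l e c"
  unfolding chord_contains_def upsW using mateW[OF d] by auto

lemma ccW0: "\<not> chord_contains (W l) d 0"
  unfolding chord_contains_def by auto

lemma childW: assumes d: "dyck l"
  shows "child (W l) (Suc e) (Suc c) \<longleftrightarrow> child l e c"
proof -
  have "(\<exists>x. chord_contains (W l) (Suc e) x \<and> chord_contains (W l) x (Suc c))
     \<longleftrightarrow> (\<exists>x. chord_contains l e x \<and> chord_contains l x c)"
    apply (rule iffI)
     apply (metis ccW0 ccW[OF d] not0_implies_Suc)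
    apply (metis ccW[OF d])
    done
  then show ?thesis unfolding child_def using ccW[OF d] by simp
qed

lemma childW0: "\<not> child (W l) e 0"
  unfolding child_def using ccW0 by auto

lemma leafW: assumes d: "dyck l"
  shows "leaf_edge (W l) (Suc e) \<longleftrightarrow> leaf_edge l e"
  unfolding leaf_edge_def upsW using mateW[OF d] by auto

lemma capW: "e < length l \<Longrightarrow> capacity (W l) (Suc e) = capacity l e"
  by (simp add: capacity_def)

lemma capW': "leaf_edge l e \<Longrightarrow> capacity (W l) (Suc e) = capacity l e"
  by (rule capW) (simp add: leaf_edge_def ups_def)

lemma f0_zero:
  assumes d: "dyck l" and f: "LS_labelling (W l) f"
  shows "f 0 = 0"
proof (cases "l = []")
  case True
  have "leaf_edge (W l) 0" using True mateW0[OF d] by (simp add: leaf_edge_def ups_def)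
  then have "f 0 \<le> capacity (W l) 0" using f by (simp add: LS_labelling_def)
  then show ?thesis by (simp add: capacity_def)
next
  case False
  have l0: "l!0" using d False unfolding dyck_def
    by (cases l) (auto elim!: allE[of _ 1] split: if_splits)
  have "False \<in> set l"
  proof (rule ccontr)
    assume "False \<notin> set l"
    then have "count_list l False = 0" by (simp add: count_list_0_iff)
    moreover have "count_list l True > 0" using l0 False by (cases l) auto
    ultimately show False using d by (simp add: dyck_def)
  qed
  then have ex: "\<exists>p. p < length l \<and> \<not> l!p" by (metis in_set_conv_nth)
  define p where "p = (LEAST p. p < length l \<and> \<not> l!p)"
  have p: "p < length l" "\<not> l!p" using LeastI_ex[OF ex] p_def by auto
  have before: "\<And>m. m < p \<Longrightarrow> l!m" using not_less_Least p_def p by fastforce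
  have p0: "p > 0" using l0 p by (cases p) auto
  have chain: "\<And>m. m < p \<Longrightarrow> f 0 \<le> f (Suc m)"
  proof -
    fix m assume "m < p" then show "f 0 \<le> f (Suc m)"
    proof (induction m)
      case 0
      have "child (W l) 0 (Suc 0)"
        using False unfolding child_def chord_contains_def upsW
        using mateW0[OF d] mateW[OF d] mate_props[OF d] l0
        by (auto simp: ups_def)
      then show ?case using f by (simp add: LS_labelling_def)
    next
      case (Suc m)
      have "child l m (Suc m)" using child_next[OF d before before] Suc p by auto
      then have "child (W l) (Suc m) (Suc (Suc m))" using childW[OF d] by simp
      then have "f (Suc m) \<le> f (Suc (Suc m))" using f by (simp add: LS_labelling_def)
      then show ?case using Suc by simp
    qed
  qed
  obtain q where q: "p = Suc q" using p0 by (cases p) auto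
  have lf: "leaf_edge l q" using leaf_next[of l q] before[of q] p q by auto
  then have "leaf_edge (W l) (Suc q)" using leafW[OF d] by simp
  then have "f (Suc q) \<le> capacity (W l) (Suc q)" using f by (simp add: LS_labelling_def)
  also have "\<dots> = capacity l q" using capW'[OF lf] .
  also have "\<dots> = 0" unfolding capacity_def count_list_0_iff
    using before q by (auto simp: in_set_conv_nth)
  finally show ?thesis using chain[of q] q by simp
qed

lemma LS_iff:
  assumes d: "dyck l"
  shows "LS_labelling (W l) f \<longleftrightarrow> f 0 = 0 \<and> LS_labelling l (f \<circ> Suc)"
proof
  assume f: "LS_labelling (W l) f"
  have a: "\<forall>e c. child l e c \<longrightarrow> f (Suc e) \<le> f (Suc c)"
    using f childW[OF d] unfolding LS_labelling_def by auto
  have b: "\<forall>e. leaf_edge l e \<longrightarrow> f (Suc e) \<le> capacity l e"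
  proof (intro allI impI)
    fix e assume e: "leaf_edge l e"
    then have "f (Suc e) \<le> capacity (W l) (Suc e)" using f leafW[OF d] unfolding LS_labelling_def by auto
    then show "f (Suc e) \<le> capacity l e" using capW'[OF e] by simp
  qed
  have c: "\<forall>i. i \<notin> ups l \<longrightarrow> f (Suc i) = 0"
    using f upsW[of l] unfolding LS_labelling_def by auto
  show "f 0 = 0 \<and> LS_labelling l (f \<circ> Suc)"
    using f0_zero[OF d f] a b c unfolding LS_labelling_def by auto
next
  assume f: "f 0 = 0 \<and> LS_labelling l (f \<circ> Suc)"
  show "LS_labelling (W l) f"
    unfolding LS_labelling_def
  proof (intro conjI allI impI)
    fix e c assume "child (W l) e c"
    then show "f e \<le> f c" using f childW[OF d] childW0
      by (cases e; cases c) (auto simp: LS_labelling_def)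
  next
    fix e assume "leaf_edge (W l) e"
    then show "f e \<le> capacity (W l) e" using f leafW[OF d] capW'
      by (cases e) (auto simp: LS_labelling_def)
  next
    fix i assume "i \<notin> ups (W l)"
    then show "f i = 0" using f upsW[of l] by (cases i) (auto simp: LS_labelling_def)
  qed
qed

theorem mainTheorem10:
  fixes lam' :: "bool list" and n :: nat
  assumes "dyck lam'" and "length lam' = 2 * (n - 1)"
  shows "P_LS (True # lam' @ [False]) = P_LS lam'"
proof -
  note d = assms(1)
  define h :: "(nat \<Rightarrow> nat) \<Rightarrow> nat \<Rightarrow> nat" where "h g = (\<lambda>i. case i of 0 \<Rightarrow> 0 | Suc j \<Rightarrow> g j)" for g
  have hS: "h g \<circ> Suc = g" for g by (auto simp: h_def)
  have h0: "h g 0 = 0" for g by (simp add: h_def)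
  have bij: "bij_betw h {g. LS_labelling lam' g} {f. LS_labelling (W lam') f}"
  unfolding bij_betw_def
  proof (intro conjI subset_antisym subsetI)
    show "inj_on h {g. LS_labelling lam' g}" by (metis hS inj_onI)
  next
    fix z assume "z \<in> h ` {g. LS_labelling lam' g}"
    then show "z \<in> {f. LS_labelling (W lam') f}" using LS_iff[OF d] hS h0 by auto
  next
    fix y assume "y \<in> {f. LS_labelling (W lam') f}"
    then have "y 0 = 0" "LS_labelling lam' (y \<circ> Suc)" using LS_iff[OF d] by auto
    moreover have "y = h (y \<circ> Suc)" using \<open>y 0 = 0\<close> by (auto simp: h_def split: nat.splits)
    ultimately show "y \<in> h ` {g. LS_labelling lam' g}" by blast
  qed
  have fin: "finite (ups lam')" by (simp add: ups_def)
  have ws: "(\<Sum>e\<in>ups (W lam'). h g e) = (\<Sum>e\<in>ups lam'. g e)" for g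
    using fin by (simp add: upsW sum.reindex h_def)
  have "P_LS (W lam') = (\<Sum>g\<in>{g. LS_labelling lam' g}. monom 1 (\<Sum>e\<in>ups (W lam'). h g e))"
    unfolding P_LS_def by (rule sum.reindex_bij_betw[OF bij, symmetric])
  also have "\<dots> = P_LS lam'" unfolding P_LS_def ws ..
  finally show ?thesis .
qed

end
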